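(* Let $\alpha\in\mathcal{P}(n)$ with $\delta(\alpha)=(d_k)_{k\ge1}$. Then for every $k\ge1$: (1) $d_{k+1}-d_k\le1$, with equality if and only if $d_j=j$ for all $1\le j\le k+1$; (2) if $d_k\ge d_{k+1}$, then $d_{k+1}\ge d_{k+2}$.
   Context: A partition of a positive integer $n$ is a finite non-increasing sequence $\alpha=(\alpha_1,\dots,\alpha_l)$ of positive integers with sum $n$; $\mathcal{P}(n)$ is the set of partitions of $n$, and $\alpha_i=0$ for $i>l$. The diagonal sequence of $\alpha$ is $\delta(\alpha)=(d_k)_{k\ge1}$ with $d_k=|\{i:1\le i\le k,\ \alpha_i+i-1\ge k\}|$. *)

theory Defs
  imports Main
begin

definition partitions :: "nat \<Rightarrow> nat list set" where
  "partitions n = {a. sorted_wrt (\<ge>) a \<and> (\<forall>x\<in>set a. 0 < x) \<and> sum_list a = n}"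

definition part :: "nat list \<Rightarrow> nat \<Rightarrow> nat" where
  "part a i = (if 1 \<le> i \<and> i \<le> length a then a ! (i - 1) else 0)"

definition diag :: "nat list \<Rightarrow> nat \<Rightarrow> nat" where
  "diag a k = card {i. 1 \<le> i \<and> i \<le> k \<and> part a i + i - 1 \<ge> k}"

end

theory Submission
  imports Defs
begin

lemma part_step:
  assumes "a \<in> partitions n" "1 \<le> i"
  shows "part a (Suc i) \<le> part a i"
proof (cases "Suc i \<le> length a")
  case True
  have s: "sorted_wrt (\<ge>) a" using assms(1) by (simp add: partitions_def)
  have "a ! i \<le> a ! (i - 1)" using sorted_wrt_nth_less[OF s, of "i-1" i] True assms(2) by simp
  then show ?thesis using True assms(2) by (simp add: part_def)
next
  case False
  then show ?thesis by (simp add: part_def)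
qed

lemma part_pos:
  assumes "a \<in> partitions n" "1 \<le> i" "i \<le> length a"
  shows "1 \<le> part a i"
proof -
  have "a ! (i - 1) \<in> set a" using assms by simp
  then have "0 < a ! (i-1)" using assms(1) by (simp add: partitions_def)
  then show ?thesis using assms by (simp add: part_def)
qed

lemma ivt:
  fixes f :: "nat \<Rightarrow> nat"
  assumes st: "\<And>x. i \<le> x \<Longrightarrow> f (Suc x) \<le> f x + 1"
  shows "f i \<le> t \<Longrightarrow> t \<le> f m \<Longrightarrow> i \<le> m \<Longrightarrow> \<exists>j. i \<le> j \<and> j \<le> m \<and> f j = t"
proof (induction m)
  case 0 then show ?case by auto
next
  case (Suc m)
  show ?case
  proof (cases "f (Suc m) = t")
    case True then show ?thesis using Suc by auto
  next
    case False
    show ?thesis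
    proof (cases "i \<le> m")
      case True
      then have "t \<le> f m" using st[OF True] False Suc.prems by linarith
      then show ?thesis using Suc.IH Suc.prems True by force
    next
      case False2: False
      then have "i = Suc m" using Suc.prems by simp
      then show ?thesis using Suc.prems False by simp
    qed
  qed
qed

definition AA where "AA a k = {i. 1 \<le> i \<and> i \<le> k \<and> k + 1 \<le> part a i + i - 1}"
definition BB where "BB a k = {i. 1 \<le> i \<and> i \<le> k \<and> part a i + i - 1 = k}"
definition CC where "CC a k = {i. i = k + 1 \<and> 1 \<le> part a i}"

lemma diag_k: "diag a k = card (AA a k) + card (BB a k)"
proof -
  have "{i. 1 \<le> i \<and> i \<le> k \<and> part a i + i - 1 \<ge> k} = AA a k \<union> BB a k"
    by (auto simp: AA_def BB_def)
  moreover have "AA a k \<inter> BB a k = {}" by (auto simp: AA_def BB_def)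
  moreover have "finite (AA a k)" "finite (BB a k)" by (auto simp: AA_def BB_def)
  ultimately show ?thesis unfolding diag_def by (simp add: card_Un_disjoint)
qed

lemma diag_k1: "diag a (k+1) = card (AA a k) + card (CC a k)"
proof -
  have "{i. 1 \<le> i \<and> i \<le> k+1 \<and> part a i + i - 1 \<ge> k+1} = AA a k \<union> CC a k"
    by (auto simp: AA_def CC_def)
  moreover have "AA a k \<inter> CC a k = {}" by (auto simp: AA_def CC_def)
  moreover have "finite (AA a k)" "finite (CC a k)" by (auto simp: AA_def CC_def)
  ultimately show ?thesis unfolding diag_def by (simp add: card_Un_disjoint)
qed

lemma card_CC: "card (CC a k) \<le> 1"
proof -
  have "CC a k \<subseteq> {k+1}" by (auto simp: CC_def)
  then show ?thesis using card_mono[of "{k+1}"] by fastforce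
qed

lemma CC_ne: "CC a k \<noteq> {} \<longleftrightarrow> 1 \<le> part a (k+1)"
  by (auto simp: CC_def)

lemma diag_full:
  assumes "\<And>i. 1 \<le> i \<Longrightarrow> i \<le> j \<Longrightarrow> j \<le> part a i + i - 1"
  shows "diag a j = j"
proof -
  have "{i. 1 \<le> i \<and> i \<le> j \<and> part a i + i - 1 \<ge> j} = {1..j}" using assms by auto
  then show ?thesis unfolding diag_def by simp
qed

theorem lemma2p1:
  fixes n :: nat and a :: "nat list" and k :: nat
  assumes "0 < n" and "a \<in> partitions n" and "1 \<le> k"
  shows "int (diag a (k + 1)) - int (diag a k) \<le> 1
         \<and> (int (diag a (k + 1)) - int (diag a k) = 1 \<longleftrightarrow>
              (\<forall>j. 1 \<le> j \<and> j \<le> k + 1 \<longrightarrow> diag a j = j))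
         \<and> (diag a k \<ge> diag a (k + 1) \<longrightarrow> diag a (k + 1) \<ge> diag a (k + 2))"
proof -
  define f where "f i = part a i + i - 1" for i
  have st: "f (Suc x) \<le> f x + 1" if "1 \<le> x" for x
    using part_step[OF assms(2) that] that by (simp add: f_def)
  have pos: "1 \<le> part a i" if "1 \<le> i" "1 \<le> part a j" "i \<le> j" for i j
  proof -
    have "j \<le> length a" using that(2) by (simp add: part_def split: if_splits)
    then show ?thesis using part_pos[OF assms(2) that(1)] that by simp
  qed
  have P1: "int (diag a (k + 1)) - int (diag a k) \<le> 1"
    using diag_k[of a k] diag_k1[of a k] card_CC[of a k] by simp
  have P2: "int (diag a (k + 1)) - int (diag a k) = 1 \<longleftrightarrow>
              (\<forall>j. 1 \<le> j \<and> j \<le> k + 1 \<longrightarrow> diag a j = j)"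
  proof
    assume h: "int (diag a (k + 1)) - int (diag a k) = 1"
    then have "card (CC a k) = 1" "card (BB a k) = 0"
      using diag_k[of a k] diag_k1[of a k] card_CC[of a k] by auto
    then have c: "1 \<le> part a (k+1)" and b: "BB a k = {}"
      using CC_ne[of a k] by (auto simp: BB_def)
    have down: "\<forall>m. m \<le> k \<longrightarrow> k + 1 \<le> f (k + 1 - m)"
    proof (intro allI impI)
      fix m assume "m \<le> k"
      then show "k + 1 \<le> f (k + 1 - m)"
      proof (induction m)
        case 0 then show ?case using c by (simp add: f_def)
      next
        case (Suc m)
        then have ih: "k + 1 \<le> f (k + 1 - m)" by simp
        define i where "i = k - m"
        have i1: "1 \<le> i" "i \<le> k" using Suc.prems by (auto simp: i_def)
        have "k + 1 - m = Suc i" using Suc.prems by (simp add: i_def)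
        then have "k \<le> f i" using ih st[OF i1(1)] by simp
        moreover have "f i \<noteq> k" using b i1 by (auto simp: BB_def f_def)
        ultimately show ?case using Suc.prems by (simp add: i_def)
      qed
    qed
    show "\<forall>j. 1 \<le> j \<and> j \<le> k + 1 \<longrightarrow> diag a j = j"
    proof (intro allI impI)
      fix j assume j: "1 \<le> j \<and> j \<le> k + 1"
      show "diag a j = j"
      proof (rule diag_full)
        fix i assume "1 \<le> i" "i \<le> j"
        have m: "k + 1 - i \<le> k" "k + 1 - (k + 1 - i) = i" using \<open>1 \<le> i\<close> \<open>i \<le> j\<close> j by auto
        have "k + 1 \<le> f (k + 1 - (k + 1 - i))" using down m(1) by blast
        then have "k + 1 \<le> f i" using \<open>i \<le> j\<close> j by simp
        then show "j \<le> part a i + i - 1" using j \<open>i \<le> j\<close> by (simp add: f_def)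
      qed
    qed
  next
    assume "\<forall>j. 1 \<le> j \<and> j \<le> k + 1 \<longrightarrow> diag a j = j"
    then have "diag a k = k" "diag a (k+1) = k+1" using assms(3) by auto
    then show "int (diag a (k + 1)) - int (diag a k) = 1" by simp
  qed
  have P3: "diag a k \<ge> diag a (k + 1) \<longrightarrow> diag a (k + 1) \<ge> diag a (k + 2)"
  proof
    assume h: "diag a k \<ge> diag a (k + 1)"
    show "diag a (k + 1) \<ge> diag a (k + 2)"
    proof (cases "1 \<le> part a (k+2)")
      case False
      then have "CC a (k+1) = {}" using CC_ne[of a "k+1"] by simp
      then show ?thesis using diag_k[of a "k+1"] diag_k1[of a "k+1"] by simp
    next
      case True
      then have c: "1 \<le> part a (k+1)" using pos[of "k+1" "k+2"] by simp
      then have "CC a k = {k+1}" by (auto simp: CC_def)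
      then have "card (CC a k) = 1" by simp
      then have "card (BB a k) \<ge> 1" using h diag_k[of a k] diag_k1[of a k] by simp
      then have "BB a k \<noteq> {}" by auto
      then obtain i where i: "i \<in> BB a k" by blast
      then have i1: "1 \<le> i" "i \<le> k" "f i = k" by (auto simp: BB_def f_def)
      have "k + 1 \<le> f (k+1)" using c by (simp add: f_def)
      then obtain j where j: "i \<le> j" "j \<le> k+1" "f j = k + 1"
        using ivt[where f=f and i=i and t="k+1" and m="k+1"] st i1 by force
      then have "j \<in> BB a (k+1)" using i1 by (auto simp: BB_def f_def)
      moreover have "finite (BB a (k+1))" by (auto simp: BB_def)
      ultimately have "card (BB a (k+1)) \<ge> 1"
        by (metis One_nat_def Suc_leI card_gt_0_iff empty_iff)
      then show ?thesis using diag_k[of a "k+1"] diag_k1[of a "k+1"] card_CC[of a "k+1"] by simp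
    qed
  qed
  show ?thesis using P1 P2 P3 by blast
qed

end
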